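(* Let $T>0$, $\lambda>0$, let $\theta:[0,T]\to(0,\infty)$ be continuous, $g_t=\sqrt{2\lambda^2\theta_t}$, $\bar\theta_T=\int_0^T\theta_zdz$, $\gamma\in(0,\infty)$, and $x_0,x_T\in\mathbb{R}^d$. Consider the problem of minimizing $\int_0^T\frac12\|\mathbf{u}_t\|_2^2dt+\frac\gamma2\|\mathbf{x}^u_T-x_T\|_2^2$ over controls $\mathbf{u}:[0,T]\to\mathbb{R}^d$, subject to $\frac{d\mathbf{x}_t}{dt}=\theta_t(x_T-\mathbf{x}_t)+g_t\mathbf{u}_t$, $\mathbf{x}^u_0=x_0$. Then the terminal state $\mathbf{x}^u_T$ of the optimally controlled trajectory satisfies $$\|\mathbf{x}^u_T-x_T\|_2^2=\frac{e^{-2\bar\theta_T}}{\big(1+\gamma\lambda^2(1-e^{-2\bar\theta_T})\big)^2}\,\|x_T-x_0\|_2^2 .$$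
   Context: This is the optimal control problem associated with the generalized Ornstein–Uhlenbeck process $d\mathbf{x}_t=\theta_t(\boldsymbol{\mu}-\mathbf{x}_t)dt+g_td\mathbf{w}_t$ with mean $\boldsymbol{\mu}=x_T$ and $g_t^2=2\lambda^2\theta_t$. *)

theory Defs
  imports "HOL-Analysis.Analysis"
begin

definition ou_g :: "real \<Rightarrow> (real \<Rightarrow> real) \<Rightarrow> real \<Rightarrow> real" where
  "ou_g lam \<theta> t = sqrt (2 * lam\<^sup>2 * \<theta> t)"

definition ou_admissible ::
  "real \<Rightarrow> real \<Rightarrow> (real \<Rightarrow> real) \<Rightarrow> 'a::euclidean_space \<Rightarrow> 'a \<Rightarrow>
   (real \<Rightarrow> 'a) \<Rightarrow> (real \<Rightarrow> 'a) \<Rightarrow> bool" where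
  "ou_admissible T lam \<theta> x0 xT u x \<longleftrightarrow>
     continuous_on {0..T} u \<and> x 0 = x0 \<and>
     (\<forall>t\<in>{0..T}. (x has_vector_derivative
        (\<theta> t *\<^sub>R (xT - x t) + ou_g lam \<theta> t *\<^sub>R u t)) (at t within {0..T}))"

definition ou_cost ::
  "real \<Rightarrow> real \<Rightarrow> 'a::euclidean_space \<Rightarrow> (real \<Rightarrow> 'a) \<Rightarrow> (real \<Rightarrow> 'a) \<Rightarrow> real" where
  "ou_cost T \<gamma> xT u x =
     integral {0..T} (\<lambda>t. (1/2) * (norm (u t))\<^sup>2) + (\<gamma>/2) * (norm (x T - xT))\<^sup>2"

definition ou_optimal ::
  "real \<Rightarrow> real \<Rightarrow> (real \<Rightarrow> real) \<Rightarrow> real \<Rightarrow> 'a::euclidean_space \<Rightarrow> 'a \<Rightarrow>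
   (real \<Rightarrow> 'a) \<Rightarrow> (real \<Rightarrow> 'a) \<Rightarrow> bool" where
  "ou_optimal T lam \<theta> \<gamma> x0 xT u x \<longleftrightarrow>
     ou_admissible T lam \<theta> x0 xT u x \<and>
     (\<forall>v y. ou_admissible T lam \<theta> x0 xT v y \<longrightarrow>
        ou_cost T \<gamma> xT u x \<le> ou_cost T \<gamma> xT v y)"

end

theory Submission
  imports Defs
begin

theorem proposition4p5:
  fixes T lam \<gamma> :: real and \<theta> :: "real \<Rightarrow> real" and x0 xT :: "'a::euclidean_space"
  assumes T: "T > 0" and lam: "lam > 0" and gam: "\<gamma> > 0"
    and cth: "continuous_on {0..T} \<theta>" and pos: "\<And>t. t \<in> {0..T} \<Longrightarrow> \<theta> t > 0"
  shows "(\<exists>u x. ou_optimal T lam \<theta> \<gamma> x0 xT u x) \<and>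
    (\<forall>u x. ou_optimal T lam \<theta> \<gamma> x0 xT u x \<longrightarrow>
      (norm (x T - xT))\<^sup>2 =
        exp (-2 * integral {0..T} \<theta>)
          / (1 + \<gamma> * lam\<^sup>2 * (1 - exp (-2 * integral {0..T} \<theta>)))\<^sup>2
          * (norm (xT - x0))\<^sup>2)"
proof -
  define \<Theta> where "\<Theta> t = integral {0..t} \<theta>" for t
  have dTh: "(\<Theta> has_real_derivative \<theta> t) (at t within {0..T})" if "t \<in> {0..T}" for t
    using integral_has_vector_derivative[OF cth that]
    unfolding \<Theta>_def has_real_derivative_iff_has_vector_derivative .
  have cTh: "continuous_on {0..T} \<Theta>"
    using dTh continuous_on_eq_continuous_within DERIV_continuous by blast
  have Th0: "\<Theta> 0 = 0" by (simp add: \<Theta>_def)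
  define g where "g t = ou_g lam \<theta> t" for t
  have g2: "(g t)\<^sup>2 = 2 * lam\<^sup>2 * \<theta> t" if "t \<in> {0..T}" for t
    using pos[OF that] by (simp add: g_def ou_g_def)
  have cg: "continuous_on {0..T} g"
    unfolding g_def ou_g_def by (intro continuous_intros cth)
  define a where "a = exp (- \<Theta> T)"
  define k where "k s = exp (\<Theta> s - \<Theta> T) * g s" for s
  have ck: "continuous_on {0..T} k"
    unfolding k_def by (intro continuous_intros cTh cg)
  define y0 where "y0 = x0 - xT"
  have A: "x T - xT = a *\<^sub>R y0 + integral {0..T} (\<lambda>s. k s *\<^sub>R v s)"
    if adm: "ou_admissible T lam \<theta> x0 xT v x" for v x
  proof -
    from adm have cv: "continuous_on {0..T} v" and x0: "x 0 = x0" and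
      dx: "\<And>t. t\<in>{0..T} \<Longrightarrow> (x has_vector_derivative
        (\<theta> t *\<^sub>R (xT - x t) + g t *\<^sub>R v t)) (at t within {0..T})"
      unfolding ou_admissible_def g_def by auto
    have "((\<lambda>t. exp (\<Theta> t) *\<^sub>R (x t - xT)) has_vector_derivative (exp (\<Theta> t) * g t) *\<^sub>R v t)
        (at t within {0..T})" if "t \<in> {0..T}" for t
      apply (rule has_vector_derivative_eq_rhs)
       apply (rule derivative_eq_intros dTh[OF that] dx[OF that] | simp)+
      apply (simp add: algebra_simps)
      done
    then have "((\<lambda>t. (exp (\<Theta> t) * g t) *\<^sub>R v t) has_integral
        (exp (\<Theta> T) *\<^sub>R (x T - xT) - exp (\<Theta> 0) *\<^sub>R (x 0 - xT))) {0..T}"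
      using T by (intro fundamental_theorem_of_calculus) auto
    then have "integral {0..T} (\<lambda>t. (exp (\<Theta> t) * g t) *\<^sub>R v t) = exp (\<Theta> T) *\<^sub>R (x T - xT) - y0"
      by (simp add: integral_unique Th0 x0 y0_def)
    then have "a *\<^sub>R integral {0..T} (\<lambda>t. (exp (\<Theta> t) * g t) *\<^sub>R v t) = (a * exp (\<Theta> T)) *\<^sub>R (x T - xT) - a *\<^sub>R y0"
      by (simp add: scaleR_diff_right)
    also have "a * exp (\<Theta> T) = 1" by (simp add: a_def exp_add[symmetric])
    finally have "a *\<^sub>R integral {0..T} (\<lambda>t. (exp (\<Theta> t) * g t) *\<^sub>R v t) = (x T - xT) - a *\<^sub>R y0" by simp
    moreover have "a *\<^sub>R integral {0..T} (\<lambda>t. (exp (\<Theta> t) * g t) *\<^sub>R v t) = integral {0..T} (\<lambda>s. k s *\<^sub>R v s)"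
      by (simp add: integral_cmul[symmetric] k_def a_def exp_diff exp_minus field_simps)
    ultimately show ?thesis by (simp add: algebra_simps)
  qed
  have ThT: "\<Theta> T \<ge> 0" unfolding \<Theta>_def
    using pos by (intro integral_nonneg integrable_continuous_interval cth) (auto intro: less_imp_le)
  define K where "K = lam\<^sup>2 * (1 - exp (-2 * \<Theta> T))"
  have K0: "K \<ge> 0" unfolding K_def using ThT by auto
  define D where "D = 1 + \<gamma> * K"
  have D0: "D > 0" unfolding D_def using K0 gam by (simp add: add_pos_nonneg)
  define c where "c = (- \<gamma> * a / D) *\<^sub>R y0"
  define us where "us s = k s *\<^sub>R c" for s
  define \<rho> where "\<rho> t = lam\<^sup>2 * a * (exp (2 * \<Theta> t) - 1)" for t
  define xs where "xs t = xT + exp (- \<Theta> t) *\<^sub>R (y0 + \<rho> t *\<^sub>R c)" for t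
  have cus: "continuous_on {0..T} us" unfolding us_def by (intro continuous_intros ck)
  have gk: "g t * k t = exp (- \<Theta> t) * (lam\<^sup>2 * a * (exp (2 * \<Theta> t) * (2 * \<theta> t)))"
    if "t \<in> {0..T}" for t
  proof -
    have "g t * k t = exp (\<Theta> t - \<Theta> T) * (g t)\<^sup>2" by (simp add: k_def power2_eq_square)
    also have "\<dots> = exp (\<Theta> t - \<Theta> T) * (2 * lam\<^sup>2 * \<theta> t)" using g2[OF that] by simp
    also have "exp (\<Theta> t - \<Theta> T) = exp (- \<Theta> t) * exp (2 * \<Theta> t) * a"
      by (simp add: a_def exp_add[symmetric])
    finally show ?thesis by simp
  qed
  have adm: "ou_admissible T lam \<theta> x0 xT us xs"
    unfolding ou_admissible_def
  proof (intro conjI ballI cus)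
    show "xs 0 = x0" by (simp add: xs_def \<rho>_def Th0 y0_def)
    fix t assume t: "t \<in> {0..T}"
    show "(xs has_vector_derivative \<theta> t *\<^sub>R (xT - xs t) + ou_g lam \<theta> t *\<^sub>R us t) (at t within {0..T})"
      unfolding xs_def \<rho>_def
      apply (rule has_vector_derivative_eq_rhs)
       apply (rule derivative_eq_intros dTh[OF t] | simp)+
      using gk[OF t]
      apply (simp add: us_def g_def[symmetric] algebra_simps)
      done
  qed
  define Ys where "Ys = xs T - xT"
  have aa: "a * a = exp (-2 * \<Theta> T)" by (simp add: a_def exp_add[symmetric])
  have aE: "a * a * exp (2 * \<Theta> T) = 1" by (simp add: a_def exp_add[symmetric])
  have Ys1: "Ys = a *\<^sub>R y0 + K *\<^sub>R c"
  proof -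
    have "exp (- \<Theta> T) * \<rho> T = K"
      unfolding \<rho>_def K_def a_def[symmetric] aa[symmetric] using aE by (simp add: algebra_simps)
    then show ?thesis by (simp add: Ys_def xs_def a_def[symmetric] scaleR_add_right)
  qed
  have Ys2: "Ys = (a / D) *\<^sub>R y0"
  proof -
    have "a + K * (- \<gamma> * a / D) = a / D" using D0 by (simp add: D_def field_simps)
    then show ?thesis unfolding Ys1 c_def by (simp add: scaleR_left_diff_distrib[symmetric])
  qed
  have cY: "c = - \<gamma> *\<^sub>R Ys" unfolding Ys2 c_def by simp
  define Cs where "Cs = ou_cost T \<gamma> xT us xs"
  have key: "y T - xT = Ys + integral {0..T} (\<lambda>s. k s *\<^sub>R (v s - us s)) \<and>
     ou_cost T \<gamma> xT v y \<ge> Cs + \<gamma>/2 * (norm (integral {0..T} (\<lambda>s. k s *\<^sub>R (v s - us s))))\<^sup>2"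
    if admv: "ou_admissible T lam \<theta> x0 xT v y" for v y
  proof -
    have cv: "continuous_on {0..T} v" using admv unfolding ou_admissible_def by auto
    define z where "z = integral {0..T} (\<lambda>s. k s *\<^sub>R (v s - us s))"
    have iv: "(\<lambda>s. k s *\<^sub>R v s) integrable_on {0..T}"
      by (intro integrable_continuous_interval continuous_intros ck cv)
    have iu: "(\<lambda>s. k s *\<^sub>R us s) integrable_on {0..T}"
      by (intro integrable_continuous_interval continuous_intros ck cus)
    have z1: "z = integral {0..T} (\<lambda>s. k s *\<^sub>R v s) - integral {0..T} (\<lambda>s. k s *\<^sub>R us s)"
      unfolding z_def scaleR_diff_right by (rule integral_diff[OF iv iu])
    have yT: "y T - xT = Ys + z"
      using A[OF admv] A[OF adm] unfolding z1 Ys_def by simp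
    have pt: "(1/2) * (norm (v s))\<^sup>2 = (1/2) * (norm (us s))\<^sup>2 + c \<bullet> (k s *\<^sub>R (v s - us s))
        + (1/2) * (norm (v s - us s))\<^sup>2" for s
    proof -
      have e: "v s = us s + (v s - us s)" by simp
      have "(norm (v s))\<^sup>2 = (norm (us s))\<^sup>2 + 2 * (us s \<bullet> (v s - us s)) + (norm (v s - us s))\<^sup>2"
        unfolding power2_norm_eq_inner by (simp add: inner_diff_left inner_diff_right inner_commute algebra_simps)
      moreover have "us s \<bullet> (v s - us s) = c \<bullet> (k s *\<^sub>R (v s - us s))" by (simp add: us_def)
      ultimately show ?thesis by simp
    qed
    have i1: "(\<lambda>s. (1/2) * (norm (us s))\<^sup>2) integrable_on {0..T}"
      by (intro integrable_continuous_interval continuous_intros cus)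
    have i2: "(\<lambda>s. c \<bullet> (k s *\<^sub>R (v s - us s))) integrable_on {0..T}"
      by (intro integrable_continuous_interval continuous_intros ck cus cv)
    have i3: "(\<lambda>s. (1/2) * (norm (v s - us s))\<^sup>2) integrable_on {0..T}"
      by (intro integrable_continuous_interval continuous_intros cus cv)
    have i2': "(\<lambda>s. k s *\<^sub>R (v s - us s)) integrable_on {0..T}"
      by (intro integrable_continuous_interval continuous_intros ck cus cv)
    have e2: "integral {0..T} (\<lambda>s. c \<bullet> (k s *\<^sub>R (v s - us s))) = c \<bullet> z"
      unfolding z_def using integral_linear[OF i2' bounded_linear_inner_right[of c]]
      by (simp add: o_def)
    have W: "integral {0..T} (\<lambda>s. (1/2) * (norm (v s - us s))\<^sup>2) \<ge> 0"
      by (rule integral_nonneg[OF i3]) simp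
    have "integral {0..T} (\<lambda>s. (1/2) * (norm (v s))\<^sup>2) =
      integral {0..T} (\<lambda>s. (1/2) * (norm (us s))\<^sup>2) + c \<bullet> z
        + integral {0..T} (\<lambda>s. (1/2) * (norm (v s - us s))\<^sup>2)"
      unfolding pt integral_add[OF integrable_add[OF i1 i2] i3] integral_add[OF i1 i2] e2 ..
    moreover have "(norm (y T - xT))\<^sup>2 = (norm Ys)\<^sup>2 + 2 * (Ys \<bullet> z) + (norm z)\<^sup>2"
      unfolding yT by (simp add: power2_norm_eq_inner algebra_simps inner_commute)
    moreover have "Cs = integral {0..T} (\<lambda>s. (1/2) * (norm (us s))\<^sup>2) + \<gamma>/2 * (norm Ys)\<^sup>2"
      by (simp add: Cs_def ou_cost_def Ys_def)
    moreover have "c \<bullet> z = - \<gamma> * (Ys \<bullet> z)" unfolding cY by simp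
    ultimately show ?thesis using W unfolding ou_cost_def z_def[symmetric] yT
      by (simp add: algebra_simps)
  qed
  have opt: "ou_optimal T lam \<theta> \<gamma> x0 xT us xs"
    unfolding ou_optimal_def
  proof (intro conjI allI impI adm)
    fix v y assume "ou_admissible T lam \<theta> x0 xT v y"
    from key[OF this] have "Cs + \<gamma>/2 * (norm (integral {0..T} (\<lambda>s. k s *\<^sub>R (v s - us s))))\<^sup>2 \<le> ou_cost T \<gamma> xT v y" by blast
    moreover have "\<gamma>/2 * (norm (integral {0..T} (\<lambda>s. k s *\<^sub>R (v s - us s))))\<^sup>2 \<ge> 0" using gam by simp
    ultimately show "ou_cost T \<gamma> xT us xs \<le> ou_cost T \<gamma> xT v y"
      unfolding Cs_def by linarith
  qed
  have fin: "(norm (x T - xT))\<^sup>2 =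
        exp (-2 * integral {0..T} \<theta>)
          / (1 + \<gamma> * lam\<^sup>2 * (1 - exp (-2 * integral {0..T} \<theta>)))\<^sup>2
          * (norm (xT - x0))\<^sup>2" if o: "ou_optimal T lam \<theta> \<gamma> x0 xT u x" for u x
  proof -
    from o have admu: "ou_admissible T lam \<theta> x0 xT u x" and le: "ou_cost T \<gamma> xT u x \<le> Cs"
      unfolding ou_optimal_def Cs_def using adm by auto
    define z where "z = integral {0..T} (\<lambda>s. k s *\<^sub>R (u s - us s))"
    from key[OF admu] have e: "x T - xT = Ys + z" and ge: "ou_cost T \<gamma> xT u x \<ge> Cs + \<gamma>/2 * (norm z)\<^sup>2"
      unfolding z_def by auto
    from le ge have "\<gamma>/2 * (norm z)\<^sup>2 \<le> 0" by linarith
    then have "(norm z)\<^sup>2 \<le> 0" using gam by (simp add: mult_le_0_iff)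
    then have "z = 0" by simp
    then have "(norm (x T - xT))\<^sup>2 = (a / D)\<^sup>2 * (norm y0)\<^sup>2"
      using e Ys2 by (simp add: power_mult_distrib power_divide)
    also have "(a / D)\<^sup>2 = exp (-2 * integral {0..T} \<theta>)
          / (1 + \<gamma> * lam\<^sup>2 * (1 - exp (-2 * integral {0..T} \<theta>)))\<^sup>2"
      using aa by (simp add: power_divide D_def K_def power2_eq_square \<Theta>_def mult.assoc)
    also have "norm y0 = norm (xT - x0)" by (simp add: y0_def norm_minus_commute)
    finally show ?thesis .
  qed
  show ?thesis using opt fin by blast
qed

end
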